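(* Let $T\in\mathbf B_m(\Omega)$ with $0\in\Omega$, and put $\mathcal H_n=\ker T^n$, $T_n=T|_{\mathcal H_n}$ (a nilpotent operator on a finite-dimensional space). If $S\in\mathcal C_T(\Omega)$, then $\phi_S$ is analytic on $\Omega$ and $S|_{\mathcal H_n}=\phi_S(T_n)$ for all $n\ge1$.
   Context: $\mathcal H$ is a complex separable Hilbert space. For a connected open $\Omega\subset\mathbb C$ and integer $m\ge1$, $\mathbf B_m(\Omega)$ is the set of $T\in\mathcal B(\mathcal H)$ with: $\Omega\subset\sigma(T)$; $\operatorname{Ran}(T-w)=\mathcal H$ for $w\in\Omega$; $\bigvee_{w\in\Omega}\ker(T-w)=\mathcal H$; $\dim\ker(T-w)=m$ for $w\in\Omega$. $\mathcal N_\lambda=\ker(T-\lambda)$. For $S$ in the commutant $\{T\}'$, $S\mathcal N_\lambda\subset\mathcal N_\lambda$ and $\Phi_S(\lambda)=S|_{\mathcal N_\lambda}$. $\mathcal C_T(\Omega)$ is the set of $S\in\{T\}'$ for which there is a scalar function $\phi_S$ on $\Omega$ with $\Phi_S(\lambda)=\phi_S(\lambda)I_{\mathcal N_\lambda}$ for all $\lambda\in\Omega$. $\phi_S(T_n)$ is defined by the holomorphic functional calculus (equivalently, by the Taylor polynomial of $\phi_S$ at $0$ of degree $n-1$). *)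

theory Defs
  imports "HOL-Analysis.Analysis"
begin

text \<open>A complex Hilbert space: a complete real inner product space carrying a
complex scalar multiplication that extends the real one and is compatible with
the norm (the complex inner product is then recovered by polarization).\<close>

class chilbert_space = real_inner + complete_space +
  fixes scaleC :: "complex \<Rightarrow> 'a \<Rightarrow> 'a"
  assumes scaleC_add_right: "scaleC a (x + y) = scaleC a x + scaleC a y"
    and scaleC_add_left: "scaleC (a + b) x = scaleC a x + scaleC b x"
    and scaleC_scaleC: "scaleC a (scaleC b x) = scaleC (a * b) x"
    and scaleC_one: "scaleC 1 x = x"
    and scaleR_scaleC: "scaleR r x = scaleC (complex_of_real r) x"
    and norm_scaleC: "norm (scaleC a x) = cmod a * norm x"

definition cblinear :: "('a::chilbert_space \<Rightarrow> 'a) \<Rightarrow> bool" where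
  "cblinear T \<longleftrightarrow> bounded_linear T \<and> (\<forall>c x. T (scaleC c x) = scaleC c (T x))"

definition eigsp :: "('a::chilbert_space \<Rightarrow> 'a) \<Rightarrow> complex \<Rightarrow> 'a set" where
  "eigsp T w = {x. T x = scaleC w x}"

definition op_spectrum :: "('a::chilbert_space \<Rightarrow> 'a) \<Rightarrow> complex set" where
  "op_spectrum T = {w. \<not> (\<exists>R. cblinear R \<and> (\<forall>x. R (T x - scaleC w x) = x)
                                        \<and> (\<forall>x. T (R x) - scaleC w (R x) = x))}"

definition CD_class :: "complex set \<Rightarrow> nat \<Rightarrow> ('a::chilbert_space \<Rightarrow> 'a) \<Rightarrow> bool" where
  "CD_class \<Omega> m T \<longleftrightarrow> cblinear T
     \<and> \<Omega> \<subseteq> op_spectrum T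
     \<and> (\<forall>w\<in>\<Omega>. surj (\<lambda>x. T x - scaleC w x))
     \<and> closure (module.span scaleC (\<Union>w\<in>\<Omega>. eigsp T w)) = UNIV
     \<and> (\<forall>w\<in>\<Omega>. vector_space.dim scaleC (eigsp T w) = m)"

definition commutant :: "('a::chilbert_space \<Rightarrow> 'a) \<Rightarrow> ('a \<Rightarrow> 'a) set" where
  "commutant T = {S. cblinear S \<and> S \<circ> T = T \<circ> S}"

definition scalar_symbol :: "('a::chilbert_space \<Rightarrow> 'a) \<Rightarrow> complex set \<Rightarrow> ('a \<Rightarrow> 'a) \<Rightarrow> (complex \<Rightarrow> complex) \<Rightarrow> bool" where
  "scalar_symbol T \<Omega> S \<phi> \<longleftrightarrow> (\<forall>w\<in>\<Omega>. \<forall>x\<in>eigsp T w. S x = scaleC (\<phi> w) x)"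

definition CT_class :: "('a::chilbert_space \<Rightarrow> 'a) \<Rightarrow> complex set \<Rightarrow> ('a \<Rightarrow> 'a) set" where
  "CT_class T \<Omega> = {S. S \<in> commutant T \<and> (\<exists>\<phi>. scalar_symbol T \<Omega> S \<phi>)}"

end

theory Submission
  imports Defs "HOL-Complex_Analysis.Complex_Analysis"
begin

context chilbert_space begin
subclass banach ..
end

lemma scaleC_zero_left [simp]: "scaleC 0 (x::'a::chilbert_space) = 0"
proof -
  have "scaleC 0 x = scaleC 0 x + scaleC 0 x" by (metis add_0 scaleC_add_left)
  then show ?thesis by simp
qed

lemma scaleC_of_real: "scaleC (complex_of_real r) (x::'a::chilbert_space) = scaleR r x"
  by (simp add: scaleR_scaleC)

lemma scaleC_zero_right [simp]: "scaleC c (0::'a::chilbert_space) = 0"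
proof -
  have "scaleC c (0::'a) = scaleC c 0 + scaleC c 0" by (metis add_0 scaleC_add_right)
  then show ?thesis by simp
qed

lemma scaleC_minus_right: "scaleC c (- x::'a::chilbert_space) = - scaleC c x"
proof -
  have "scaleC c (- x) + scaleC c x = 0" by (simp flip: scaleC_add_right)
  thus ?thesis by (simp add: add_eq_0_iff2)
qed

lemma scaleC_diff_right: "scaleC c (x - y::'a::chilbert_space) = scaleC c x - scaleC c y"
  by (metis diff_conv_add_uminus scaleC_add_right scaleC_minus_right)

lemma scaleC_minus_left: "scaleC (- c) (x::'a::chilbert_space) = - scaleC c x"
proof -
  have "scaleC (- c) x + scaleC c x = 0" by (simp flip: scaleC_add_left)
  thus ?thesis by (simp add: add_eq_0_iff2)
qed

lemma scaleC_diff_left: "scaleC (c - d) (x::'a::chilbert_space) = scaleC c x - scaleC d x"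
  by (metis diff_conv_add_uminus scaleC_add_left scaleC_minus_left)

lemma scaleC_scaleR_commute: "scaleC c (scaleR r x) = scaleR r (scaleC c (x::'a::chilbert_space))"
  by (simp add: scaleR_scaleC scaleC_scaleC mult.commute)

lemma bounded_linear_scaleC: "bounded_linear (\<lambda>x::'a::chilbert_space. scaleC c x)"
  by (rule bounded_linear_intro[where K="cmod c"])
     (auto simp: scaleC_add_right scaleC_scaleR_commute norm_scaleC)

lemma scaleC_sum_right: "scaleC c (sum f A) = (\<Sum>a\<in>A. scaleC c (f a::'a::chilbert_space))"
  by (induct A rule: infinite_finite_induct) (auto simp: scaleC_add_right)

lemma scaleC_neg1: "scaleC (-1) (x::'a::chilbert_space) = - x"
  by (simp add: scaleC_minus_left scaleC_one)

lemma scaleC_ii: "scaleC \<i> (scaleC \<i> (x::'a::chilbert_space)) = - x"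
  by (simp add: scaleC_scaleC scaleC_neg1)

lemma inner_scaleC_ii: "inner (scaleC \<i> x) (scaleC \<i> (y::'a::chilbert_space)) = inner x y"
proof -
  have "inner (scaleC \<i> x) (scaleC \<i> y) = ((norm (scaleC \<i> x + scaleC \<i> y))^2 - (norm (scaleC \<i> x))^2 - (norm (scaleC \<i> y))^2)/2"
    by (simp add: dot_norm)
  also have "\<dots> = ((norm (x + y))^2 - (norm x)^2 - (norm y)^2)/2"
    by (simp add: norm_scaleC flip: scaleC_add_right)
  also have "\<dots> = inner x y" by (simp add: dot_norm)
  finally show ?thesis .
qed

lemma scaleC_decomp: "scaleC c (x::'a::chilbert_space) = scaleR (Re c) x + scaleR (Im c) (scaleC \<i> x)"
proof -
  have "c = complex_of_real (Re c) + complex_of_real (Im c) * \<i>" by (simp add: complex_eq_iff)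
  then have "scaleC c x = scaleC (complex_of_real (Re c) + complex_of_real (Im c) * \<i>) x" by simp
  also have "\<dots> = scaleR (Re c) x + scaleR (Im c) (scaleC \<i> x)"
    by (simp add: scaleC_add_left scaleR_scaleC scaleC_scaleC)
  finally show ?thesis .
qed

definition lfun :: "'a::chilbert_space \<Rightarrow> 'a \<Rightarrow> complex" where
  "lfun u x = Complex (inner x u) (inner x (scaleC \<i> u))"

lemma lfun_bl: "bounded_linear (lfun u)"
proof -
  have "bounded_linear (\<lambda>x. complex_of_real (inner x u) + complex_of_real (inner x (scaleC \<i> u)) * \<i>)"
    by (intro bounded_linear_add bounded_linear_mult_const bounded_linear_compose[OF bounded_linear_of_real]
        bounded_linear_inner_left)
  moreover have "(\<lambda>x. complex_of_real (inner x u) + complex_of_real (inner x (scaleC \<i> u)) * \<i>) = lfun u"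
    by (auto simp: lfun_def complex_eq_iff)
  ultimately show ?thesis by simp
qed

lemma lfun_ii: "lfun u (scaleC \<i> x) = \<i> * lfun u x"
proof -
  have "inner (scaleC \<i> x) u = - inner x (scaleC \<i> u)"
    using inner_scaleC_ii[of "scaleC \<i> x" u] by (simp add: scaleC_ii)
  moreover have "inner (scaleC \<i> x) (scaleC \<i> u) = inner x u" by (rule inner_scaleC_ii)
  ultimately show ?thesis by (simp add: lfun_def complex_eq_iff)
qed

lemma lfun_scaleC: "lfun u (scaleC c x) = c * lfun u x"
proof -
  interpret bounded_linear "lfun u" by (rule lfun_bl)
  have "lfun u (scaleC c x) = Re c *\<^sub>R lfun u x + Im c *\<^sub>R (\<i> * lfun u x)"
    by (subst scaleC_decomp) (simp add: add scale lfun_ii)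
  also have "\<dots> = c * lfun u x" by (simp add: complex_eq_iff)
  finally show ?thesis .
qed

lemma lfun_self: "lfun x x = complex_of_real ((norm x)^2)"
proof -
  have "inner x (scaleC \<i> x) = inner (scaleC \<i> x) (scaleC \<i> (scaleC \<i> x))" by (simp add: inner_scaleC_ii)
  also have "\<dots> = - inner (scaleC \<i> x) x" by (simp add: scaleC_ii)
  also have "\<dots> = - inner x (scaleC \<i> x)" by (simp add: inner_commute)
  finally have "inner x (scaleC \<i> x) = 0" by simp
  then show ?thesis by (simp add: lfun_def complex_eq_iff power2_norm_eq_inner)
qed

lemma lfun_ext: assumes "\<And>u. lfun u x = lfun u (y::'a::chilbert_space)" shows "x = y"
proof -
  interpret bounded_linear "lfun (x - y)" by (rule lfun_bl)
  have "lfun (x-y) (x - y) = 0" using assms[of "x-y"] by (simp add: diff)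
  then show ?thesis by (simp add: lfun_self)
qed


lemma open_mapping_approx:
  fixes A :: "'a::banach \<Rightarrow> 'b::banach"
  assumes bl: "bounded_linear A" and sA: "surj A"
  shows "\<exists>M>0. \<forall>y. \<exists>x. norm x \<le> M * norm y \<and> norm (y - A x) \<le> norm y / 2"
proof -
  interpret A: bounded_linear A by fact
  define F where "F n = closure (A ` ball 0 (real (Suc n)))" for n
  have closedF: "closed (F n)" for n unfolding F_def by simp
  have UF: "(\<Union>n. F n) = UNIV"
  proof -
    have "y \<in> (\<Union>n. F n)" for y
    proof -
      obtain x where x: "y = A x" using sA by (metis surjD)
      obtain n0 where "norm x < real n0" using reals_Archimedean2 by blast
      then have n: "norm x < real (Suc n0)" by simp
      hence "x \<in> ball 0 (real (Suc n0))" by simp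
      hence "y \<in> A ` ball 0 (real (Suc n0))" unfolding x by (rule imageI)
      hence "y \<in> F n0" unfolding F_def by (rule closure_subset[THEN subsetD])
      thus ?thesis by (rule UN_I[OF UNIV_I])
    qed
    thus ?thesis by blast
  qed
  have "\<exists>n. interior (F n) \<noteq> {}"
  proof (rule ccontr)
    assume nt: "\<not> ?thesis"
    have "euclidean interior_of (\<Union> (range F)) = {}"
      apply (rule Baire_category_alt)
      subgoal using completely_metrizable_space_euclidean by blast
      subgoal by simp
      subgoal for T using closedF nt by (auto simp: closed_closedin[symmetric])
      done
    thus False using UF by simp
  qed
  then obtain n y0 where "y0 \<in> interior (F n)" by blast
  then obtain e where e0: "e > 0" "ball y0 e \<subseteq> interior (F n)"
    using openE[OF open_interior] by blast
  hence e: "e > 0" "ball y0 e \<subseteq> F n" using interior_subset by blast+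
  define N where "N = real (Suc n)"
  have N: "N > 0" by (simp add: N_def)
  have CL: "\<exists>x. norm x < 2 * N \<and> dist (A x) z < d" if z: "norm z < e" and d: "d > 0" for z d
  proof -
    have "y0 + z \<in> F n" using e z by (auto simp: dist_norm)
    hence "\<forall>e>0. \<exists>y\<in>A ` ball 0 N. dist y (y0 + z) < e"
      unfolding F_def N_def closure_approachable .
    then obtain a1 where a1: "a1 \<in> A ` ball 0 N" "dist a1 (y0 + z) < d/2"
      using half_gt_zero[OF d] by blast
    have "y0 \<in> F n" using e by auto
    hence "\<forall>e>0. \<exists>y\<in>A ` ball 0 N. dist y y0 < e"
      unfolding F_def N_def closure_approachable .
    then obtain a2 where a2: "a2 \<in> A ` ball 0 N" "dist a2 y0 < d/2"
      using half_gt_zero[OF d] by blast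
    obtain x1 where x1: "norm x1 < N" "a1 = A x1" using a1 by auto
    obtain x2 where x2: "norm x2 < N" "a2 = A x2" using a2 by auto
    have "norm (x1 - x2) \<le> norm x1 + norm x2" by (rule norm_triangle_ineq4)
    hence "norm (x1 - x2) < 2 * N" using x1 x2 by simp
    moreover have "dist (A (x1 - x2)) z < d"
    proof -
      have eq: "A (x1 - x2) - z = (a1 - (y0 + z)) - (a2 - y0)" using x1 x2 by (simp add: A.diff)
      have "dist (A (x1 - x2)) z = norm ((a1 - (y0 + z)) - (a2 - y0))" by (simp only: dist_norm eq)
      also have "\<dots> \<le> norm (a1 - (y0 + z)) + norm (a2 - y0)" by (rule norm_triangle_ineq4)
      also have "\<dots> < d" using a1(2) a2(2) by (simp add: dist_norm)
      finally show ?thesis .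
    qed
    ultimately show ?thesis by blast
  qed
  define M where "M = 4 * N / e"
  have "\<exists>x. norm x \<le> M * norm y \<and> norm (y - A x) \<le> norm y / 2" for y
  proof (cases "y = 0")
    case True thus ?thesis by (intro exI[of _ 0]) auto
  next
    case False
    hence ny: "norm y > 0" by simp
    define t where "t = e / (2 * norm y)"
    have t: "t > 0" using e ny by (simp add: t_def)
    have nz: "norm (t *\<^sub>R y) < e" using ny e by (simp add: t_def)
    obtain x' where x': "norm x' < 2 * N" "dist (A x') (t *\<^sub>R y) < t * (norm y / 2)"
      using CL[OF nz, of "t * (norm y / 2)"] t ny by auto
    define x where "x = (1/t) *\<^sub>R x'"
    have "norm x = norm x' / t" using t by (simp add: x_def)
    also have "\<dots> \<le> 2 * N / t" using x' t by (simp add: divide_right_mono)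
    also have "\<dots> = M * norm y" using e ny by (simp add: t_def M_def field_simps)
    finally have 1: "norm x \<le> M * norm y" .
    have "y - A x = (1/t) *\<^sub>R (t *\<^sub>R y - A x')" using t by (simp add: x_def A.scaleR scaleR_diff_right)
    hence "norm (y - A x) = dist (A x') (t *\<^sub>R y) / t" using t by (simp add: dist_norm norm_minus_commute)
    also have "\<dots> \<le> norm y / 2" using x' t by (simp add: field_simps)
    finally show ?thesis using 1 by blast
  qed
  moreover have "M > 0" using N e by (simp add: M_def)
  ultimately show ?thesis by blast
qed

lemma open_mapping:
  fixes A :: "'a::banach \<Rightarrow> 'b::banach"
  assumes bl: "bounded_linear A" and sA: "surj A"
  shows "\<exists>C>0. \<forall>y. \<exists>x. A x = y \<and> norm x \<le> C * norm y"
proof -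
  interpret A: bounded_linear A by fact
  obtain M where M: "M > 0" "\<And>y. \<exists>x. norm x \<le> M * norm y \<and> norm (y - A x) \<le> norm y / 2"
    using open_mapping_approx[OF assms] by blast
  then obtain P where P: "\<And>y. norm (P y) \<le> M * norm y \<and> norm (y - A (P y)) \<le> norm y / 2" by metis
  have "\<exists>x. A x = y \<and> norm x \<le> (2*M) * norm y" for y
  proof -
    define r where "r k = ((\<lambda>r. r - A (P r)) ^^ k) y" for k
    have rS: "r (Suc k) = r k - A (P (r k))" for k by (simp add: r_def)
    have r0: "r 0 = y" by (simp add: r_def)
    have rb: "norm (r k) \<le> norm y * (1/2)^k" for k
    proof (induction k)
      case 0 thus ?case by (simp add: r0)
    next
      case (Suc k)
      have "norm (r (Suc k)) \<le> norm (r k) / 2" using P[of "r k"] by (simp add: rS)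
      also have "\<dots> \<le> norm y * (1/2)^k / 2" using Suc by simp
      finally show ?case by simp
    qed
    define xs where "xs k = P (r k)" for k
    have xb: "norm (xs k) \<le> M * norm y * (1/2)^k" for k
    proof -
      have "norm (xs k) \<le> M * norm (r k)" using P[of "r k"] by (simp add: xs_def)
      also have "\<dots> \<le> M * (norm y * (1/2)^k)" using rb[of k] M(1) by (simp add: mult_left_mono)
      finally show ?thesis by simp
    qed
    have sg: "summable (\<lambda>k. M * norm y * (1/2::real)^k)"
      by (intro summable_mult summable_geometric) simp
    have sx: "summable xs" by (rule summable_comparison_test'[OF sg, of 0]) (use xb in auto)
    have rlim: "r \<longlonglongrightarrow> 0"
    proof (rule Lim_null_comparison[where g="\<lambda>k. norm y * (1/2)^k"])
      show "\<forall>\<^sub>F k in sequentially. norm (r k) \<le> norm y * (1 / 2) ^ k" using rb by simp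
      show "(\<lambda>k. norm y * (1/2::real)^k) \<longlonglongrightarrow> 0"
        by (intro tendsto_mult_right_zero LIMSEQ_realpow_zero) auto
    qed
    have "(\<lambda>k. r k - r (Suc k)) sums (r 0 - 0)" by (rule telescope_sums'[OF rlim])
    hence s1: "(\<lambda>k. A (xs k)) sums y" by (simp add: rS xs_def r0)
    have s2: "(\<lambda>k. A (xs k)) sums A (suminf xs)" by (rule A.sums[OF summable_sums[OF sx]])
    have Ax: "A (suminf xs) = y" using sums_unique2[OF s2 s1] .
    have "norm (suminf xs) \<le> (\<Sum>k. M * norm y * (1/2::real)^k)" by (rule norm_suminf_le[OF xb sg])
    also have "\<dots> = M * norm y * 2" by (simp add: suminf_mult suminf_geometric)
    finally show ?thesis using Ax by (intro exI[of _ "suminf xs"]) (simp add: mult_ac)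
  qed
  thus ?thesis using M(1) by (intro exI[of _ "2*M"]) auto
qed


lemma vs_scaleC: "vector_space (scaleC :: complex \<Rightarrow> 'a::chilbert_space \<Rightarrow> 'a)"
  by unfold_locales (simp_all add: scaleC_add_right scaleC_add_left scaleC_scaleC scaleC_one)

lemma dim_pos_nonzero:
  assumes "vector_space.dim (scaleC :: complex \<Rightarrow> 'a::chilbert_space \<Rightarrow> 'a) E \<ge> 1"
  shows "\<exists>v\<in>E. v \<noteq> 0"
proof (rule ccontr)
  interpret V: vector_space "scaleC :: complex \<Rightarrow> 'a \<Rightarrow> 'a" by (rule vs_scaleC)
  assume "\<not> (\<exists>v\<in>E. v \<noteq> 0)"
  hence "E = {} \<or> E = {0}" by auto
  hence "V.span E = V.span {}" by auto
  hence "V.dim E = card ({}::'a set)" by (rule V.dim_eq_card[OF _ V.independent_empty, OF sym])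
  thus False using assms by simp
qed

definition gam :: "(nat \<Rightarrow> 'a::chilbert_space) \<Rightarrow> complex \<Rightarrow> 'a" where
  "gam c u = (\<Sum>k. scaleC (u^k) (c k))"

lemma chain_summable:
  fixes c :: "nat \<Rightarrow> 'a::chilbert_space"
  assumes bnd: "\<And>k. norm (c k) \<le> K * D^k" and D: "D > 0" and u: "cmod u * D < 1"
  shows "summable (\<lambda>k. scaleC (u^k) (c k))"
proof (rule summable_comparison_test'[where N=0])
  show "summable (\<lambda>k. K * (cmod u * D)^k)"
    using u D by (intro summable_mult summable_geometric) simp
  fix k :: nat
  have "norm (scaleC (u^k) (c k)) = cmod u ^ k * norm (c k)" by (simp add: norm_scaleC norm_power)
  also have "\<dots> \<le> cmod u ^ k * (K * D^k)" by (intro mult_left_mono bnd) simp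
  also have "\<dots> = K * (cmod u * D)^k" by (simp add: power_mult_distrib)
  finally show "norm (scaleC (u^k) (c k)) \<le> K * (cmod u * D)^k" .
qed

lemma chain_eig:
  fixes A :: "'a::chilbert_space \<Rightarrow> 'a"
  assumes bl: "bounded_linear A" and hom: "\<And>a x. A (scaleC a x) = scaleC a (A x)"
    and c0: "A (c 0) = 0" and cS: "\<And>k. A (c (Suc k)) = c k"
    and sm: "summable (\<lambda>k. scaleC (u^k) (c k))"
  shows "A (gam c u) = scaleC u (gam c u)"
proof -
  interpret A: bounded_linear A by fact
  interpret U: bounded_linear "\<lambda>x::'a. scaleC u x" by (rule bounded_linear_scaleC)
  have s: "(\<lambda>k. scaleC (u^k) (c k)) sums gam c u" unfolding gam_def using sm by (rule summable_sums)
  have s1: "(\<lambda>k. A (scaleC (u^k) (c k))) sums A (gam c u)" by (rule A.sums[OF s])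
  have s2: "(\<lambda>k. scaleC u (scaleC (u^k) (c k))) sums scaleC u (gam c u)" by (rule U.sums[OF s])
  have "(\<lambda>k. A (scaleC (u^(Suc k)) (c (Suc k)))) = (\<lambda>k. scaleC u (scaleC (u^k) (c k)))"
    by (simp add: hom cS scaleC_scaleC)
  with s2 have "(\<lambda>k. A (scaleC (u^(Suc k)) (c (Suc k)))) sums scaleC u (gam c u)" by simp
  hence "(\<lambda>k. A (scaleC (u^k) (c k))) sums (scaleC u (gam c u) + A (scaleC (u^0) (c 0)))"
    by (subst (asm) sums_Suc_iff)
  hence "(\<lambda>k. A (scaleC (u^k) (c k))) sums (scaleC u (gam c u))" by (simp add: hom c0)
  thus ?thesis using s1 sums_unique2 by metis
qed

lemma gam_zero: "gam c 0 = c 0"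
proof -
  have "(\<lambda>k. scaleC (0^k) (c k)) = (\<lambda>k. if k = 0 then c 0 else 0)" by (rule ext) (simp add: scaleC_one power_0_left)
  moreover have "(\<lambda>k::nat. if k = 0 then c 0 else 0) sums c 0" by (rule sums_single)
  ultimately show ?thesis unfolding gam_def by (simp add: sums_iff)
qed

lemma chain_fps:
  fixes B :: "'a::chilbert_space \<Rightarrow> 'a"
  assumes bl: "bounded_linear B" and hom: "\<And>a x. B (scaleC a x) = scaleC a (B x)"
    and sm: "\<And>u. u \<in> ball 0 \<rho> \<Longrightarrow> summable (\<lambda>k. scaleC (u^k) (c k))" and rho: "\<rho> > 0"
  shows "(\<lambda>u. lfun v (B (gam c u))) has_fps_expansion Abs_fps (\<lambda>k. lfun v (B (c k)))"
proof (rule has_fps_expansionI)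
  interpret L: bounded_linear "\<lambda>x. lfun v (B x)"
    by (rule bounded_linear_compose[OF lfun_bl bl])
  have ev: "eventually (\<lambda>u. u \<in> ball 0 \<rho>) (nhds (0::complex))"
    using rho by (intro eventually_nhds_in_open) auto
  show "\<forall>\<^sub>F u in nhds 0. (\<lambda>n. Abs_fps (\<lambda>k. lfun v (B (c k))) $ n * u ^ n) sums lfun v (B (gam c u))"
  proof (rule eventually_mono[OF ev])
    fix u :: complex assume u: "u \<in> ball 0 \<rho>"
    have "(\<lambda>k. lfun v (B (scaleC (u^k) (c k)))) sums lfun v (B (gam c u))"
      unfolding gam_def by (rule L.sums[OF summable_sums[OF sm[OF u]]])
    thus "(\<lambda>n. Abs_fps (\<lambda>k. lfun v (B (c k))) $ n * u ^ n) sums lfun v (B (gam c u))"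
      by (simp add: hom lfun_scaleC mult.commute)
  qed
qed


lemma cblinearD:
  assumes "cblinear T"
  shows "bounded_linear T" "\<And>c x. T (scaleC c x) = scaleC c (T x)"
  using assms by (auto simp: cblinear_def)

lemma shifted_cb:
  fixes T :: "'a::chilbert_space \<Rightarrow> 'a"
  assumes "cblinear T"
  shows "bounded_linear (\<lambda>x. T x - scaleC w x)"
    "\<And>c x. T (scaleC c x) - scaleC w (scaleC c x) = scaleC c (T x - scaleC w x)"
proof -
  show "bounded_linear (\<lambda>x. T x - scaleC w x)"
    by (intro bounded_linear_sub cblinearD(1)[OF assms] bounded_linear_scaleC)
  fix c x
  show "T (scaleC c x) - scaleC w (scaleC c x) = scaleC c (T x - scaleC w x)"
    by (simp add: cblinearD(2)[OF assms] scaleC_scaleC scaleC_diff_right mult.commute)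
qed

lemma local_expansion:
  fixes T S :: "'a::chilbert_space \<Rightarrow> 'a"
  assumes T: "cblinear T" and Scb: "cblinear S" and sym: "scalar_symbol T \<Omega> S \<phi>"
    and Om: "ball w0 r \<subseteq> \<Omega>" and r: "r > 0"
    and c0: "T (c 0) = scaleC w0 (c 0)" and cS: "\<And>k. T (c (Suc k)) - scaleC w0 (c (Suc k)) = c k"
    and bnd: "\<And>k. norm (c k) \<le> K * D^k" and D: "D > 0"
  shows "\<exists>\<rho>>0. \<forall>v. (\<lambda>u. lfun v (gam c u)) has_fps_expansion Abs_fps (\<lambda>k. lfun v (c k))
        \<and> (\<lambda>u. lfun v (S (gam c u))) has_fps_expansion Abs_fps (\<lambda>k. lfun v (S (c k)))
        \<and> (\<forall>u\<in>ball 0 \<rho>. lfun v (S (gam c u)) = \<phi> (u + w0) * lfun v (gam c u))"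
proof -
  define \<rho> where "\<rho> = min r (1/D)"
  have rho: "\<rho> > 0" using r D by (simp add: \<rho>_def)
  have sm: "summable (\<lambda>k. scaleC (u^k) (c k))" if u: "u \<in> ball 0 \<rho>" for u
  proof (rule chain_summable[OF bnd D])
    have "cmod u < 1/D" using u by (simp add: \<rho>_def)
    thus "cmod u * D < 1" using D by (simp add: field_simps)
  qed
  have eig: "T (gam c u) = scaleC (u + w0) (gam c u)" if u: "u \<in> ball 0 \<rho>" for u
  proof -
    have "T (gam c u) - scaleC w0 (gam c u) = scaleC u (gam c u)"
      by (rule chain_eig[OF shifted_cb[OF T] _ cS sm[OF u]]) (simp add: c0)
    thus ?thesis by (simp add: scaleC_add_left algebra_simps)
  qed
  have Sg: "S (gam c u) = scaleC (\<phi> (u + w0)) (gam c u)" if u: "u \<in> ball 0 \<rho>" for u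
  proof -
    have "u + w0 \<in> ball w0 r" using u by (simp add: \<rho>_def dist_norm)
    hence "u + w0 \<in> \<Omega>" using Om by blast
    moreover have "gam c u \<in> eigsp T (u + w0)" using eig[OF u] by (simp add: eigsp_def)
    ultimately show ?thesis using sym by (simp add: scalar_symbol_def)
  qed
  have "(\<lambda>u. lfun v (gam c u)) has_fps_expansion Abs_fps (\<lambda>k. lfun v (c k))" for v
    using chain_fps[of "\<lambda>x. x" \<rho> c v] sm rho by simp
  moreover have "(\<lambda>u. lfun v (S (gam c u))) has_fps_expansion Abs_fps (\<lambda>k. lfun v (S (c k)))" for v
    by (rule chain_fps[OF cblinearD[OF Scb] sm rho])
  moreover have "lfun v (S (gam c u)) = \<phi> (u + w0) * lfun v (gam c u)" if "u \<in> ball 0 \<rho>" for u v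
    using Sg[OF that] by (simp add: lfun_scaleC)
  ultimately show ?thesis using rho by blast
qed

lemma phi_deriv:
  fixes T S :: "'a::chilbert_space \<Rightarrow> 'a"
  assumes CD: "CD_class \<Omega> m T" and m: "m \<ge> 1" and op: "open \<Omega>" and w0: "w0 \<in> \<Omega>"
    and Scb: "cblinear S" and sym: "scalar_symbol T \<Omega> S \<phi>"
  shows "\<exists>d. DERIV \<phi> w0 :> d"
proof -
  have T: "cblinear T" using CD by (simp add: CD_class_def)
  have sA: "surj (\<lambda>x. T x - scaleC w0 x)" using CD w0 by (simp add: CD_class_def)
  obtain C where C: "C > 0" "\<And>y. \<exists>x. T x - scaleC w0 x = y \<and> norm x \<le> C * norm y"
    using open_mapping[OF shifted_cb(1)[OF T] sA] by blast
  then obtain R where R: "\<And>y. T (R y) - scaleC w0 (R y) = y" "\<And>y. norm (R y) \<le> C * norm y"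
    by metis
  have "vector_space.dim (scaleC :: complex \<Rightarrow> 'a \<Rightarrow> 'a) (eigsp T w0) \<ge> 1"
    using CD w0 m by (simp add: CD_class_def)
  then obtain v where v: "v \<in> eigsp T w0" "v \<noteq> 0" using dim_pos_nonzero by blast
  define c where "c k = (R ^^ k) v" for k
  have c0: "T (c 0) = scaleC w0 (c 0)" using v by (simp add: c_def eigsp_def)
  have cS: "T (c (Suc k)) - scaleC w0 (c (Suc k)) = c k" for k by (simp add: c_def R(1))
  have bnd: "norm (c k) \<le> norm v * C^k" for k
  proof (induction k)
    case 0 thus ?case by (simp add: c_def)
  next
    case (Suc k)
    have "norm (c (Suc k)) \<le> C * norm (c k)" using R(2) by (simp add: c_def)
    also have "\<dots> \<le> C * (norm v * C^k)" using Suc C(1) by (simp add: mult_left_mono)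
    finally show ?case by (simp add: mult_ac)
  qed
  obtain r where r: "r > 0" "ball w0 r \<subseteq> \<Omega>" using op w0 openE by blast
  obtain \<rho> where rho: "\<rho> > 0" and ex: "\<And>v'. (\<lambda>u. lfun v' (gam c u)) has_fps_expansion Abs_fps (\<lambda>k. lfun v' (c k))
        \<and> (\<lambda>u. lfun v' (S (gam c u))) has_fps_expansion Abs_fps (\<lambda>k. lfun v' (S (c k)))
        \<and> (\<forall>u\<in>ball 0 \<rho>. lfun v' (S (gam c u)) = \<phi> (u + w0) * lfun v' (gam c u))"
    using local_expansion[OF T Scb sym r(2) r(1) c0 cS bnd C(1)] by blast
  define f where "f = (\<lambda>u. lfun v (gam c u))"
  define g where "g = (\<lambda>u. lfun v (S (gam c u)))"
  have fF: "f has_fps_expansion Abs_fps (\<lambda>k. lfun v (c k))" using ex[of v] by (simp add: f_def)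
  have gG: "g has_fps_expansion Abs_fps (\<lambda>k. lfun v (S (c k)))" using ex[of v] by (simp add: g_def)
  have fg: "\<And>u. u \<in> ball 0 \<rho> \<Longrightarrow> g u = \<phi> (u + w0) * f u" using ex[of v] by (simp add: f_def g_def)
  have f0: "f 0 \<noteq> 0" using v(2) by (simp add: f_def gam_zero c_def lfun_self)
  have F0: "Abs_fps (\<lambda>k. lfun v (c k)) $ 0 \<noteq> 0" using v(2) by (simp add: c_def lfun_self)
  have "(\<lambda>u. g u / f u) has_fps_expansion (Abs_fps (\<lambda>k. lfun v (S (c k))) / Abs_fps (\<lambda>k. lfun v (c k)))"
    by (rule has_fps_expansion_divide'[OF gG fF F0])
  then obtain s where s: "open s" "0 \<in> s" "(\<lambda>u. g u / f u) holomorphic_on s"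
    by (rule has_fps_expansion_imp_holomorphic)
  then obtain d where d: "DERIV (\<lambda>u. g u / f u) 0 :> d" using holomorphic_on_open by blast
  have "continuous (at 0 within UNIV) f" by (rule has_fps_expansion_imp_continuous[OF fF])
  hence "(f \<longlongrightarrow> f 0) (at 0)" by (simp add: continuous_within)
  hence "eventually (\<lambda>u. f u \<noteq> 0) (at 0)" using f0 by (rule tendsto_imp_eventually_ne)
  hence ev1: "eventually (\<lambda>u. f u \<noteq> 0) (nhds 0)" using f0 by (simp add: eventually_nhds_conv_at)
  have ev2: "eventually (\<lambda>u. u \<in> ball 0 \<rho>) (nhds (0::complex))"
    using rho by (intro eventually_nhds_in_open) auto
  have "eventually (\<lambda>u. \<phi> (u + w0) = g u / f u) (nhds 0)"
    using ev1 ev2 by eventually_elim (simp add: fg)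
  hence "DERIV (\<lambda>u. \<phi> (u + w0)) 0 :> d" using d by (subst DERIV_cong_ev) auto
  hence "DERIV \<phi> w0 :> d" using DERIV_shift[of \<phi> d 0 w0] by simp
  thus ?thesis by auto
qed


theorem proposition5p5:
  fixes T S :: "'h::{chilbert_space, second_countable_topology} \<Rightarrow> 'h"
    and \<Omega> :: "complex set" and m :: nat and \<phi> :: "complex \<Rightarrow> complex"
  assumes "open \<Omega>" and "connected \<Omega>" and "m \<ge> 1"
    and "CD_class \<Omega> m T" and "0 \<in> \<Omega>"
    and "S \<in> CT_class T \<Omega>" and "scalar_symbol T \<Omega> S \<phi>"
  shows "\<phi> holomorphic_on \<Omega> \<and>
    (\<forall>n\<ge>1. \<forall>x. (T ^^ n) x = 0 \<longrightarrow>
        S x = (\<Sum>k<n. scaleC ((deriv ^^ k) \<phi> 0 / fact k) ((T ^^ k) x)))"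
proof -
  have T: "cblinear T" using assms(4) by (simp add: CD_class_def)
  have Scb: "cblinear S" using assms(6) by (simp add: CT_class_def commutant_def)
  have holo: "\<phi> holomorphic_on \<Omega>"
    unfolding holomorphic_on_open[OF assms(1)]
    using phi_deriv[OF assms(4,3,1) _ Scb assms(7)] by blast
  moreover have "\<forall>n\<ge>1. \<forall>x. (T ^^ n) x = 0 \<longrightarrow>
        S x = (\<Sum>k<n. scaleC ((deriv ^^ k) \<phi> 0 / fact k) ((T ^^ k) x))"
  proof (intro allI impI)
    fix n :: nat and x :: 'h
    assume n: "n \<ge> 1" and x: "(T ^^ n) x = 0"
    have sA: "surj (\<lambda>x. T x - scaleC 0 x)" using assms(4,5) unfolding CD_class_def by blast
    obtain C where C: "C > 0" "\<And>y. \<exists>z. T z - scaleC 0 z = y \<and> norm z \<le> C * norm y"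
      using open_mapping[OF shifted_cb(1)[OF T] sA] by blast
    then obtain R where R: "\<And>y. T (R y) = y" "\<And>y. norm (R y) \<le> C * norm y"
      by (metis scaleC_zero_left diff_zero)
    define c where "c k = (if k < n then (T ^^ (n - 1 - k)) x else (R ^^ (k - n + 1)) x)" for k
    have c0: "T (c 0) = scaleC 0 (c 0)"
    proof -
      have "T (c 0) = T ((T ^^ (n-1)) x)" using n by (simp add: c_def)
      also have "\<dots> = (T ^^ Suc (n-1)) x" by (simp only: funpow.simps(2) o_apply)
      also have "Suc (n-1) = n" using n by simp
      finally show ?thesis using x by simp
    qed
    have cS: "T (c (Suc k)) - scaleC 0 (c (Suc k)) = c k" for k
    proof -
      consider "Suc k < n" | "Suc k = n" | "Suc k > n" by linarith
      then have "T (c (Suc k)) = c k"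
      proof cases
        case 1
        then have "T (c (Suc k)) = T ((T ^^ (n - 1 - Suc k)) x)" by (simp add: c_def)
        also have "\<dots> = (T ^^ Suc (n - 1 - Suc k)) x" by (simp only: funpow.simps(2) o_apply)
        also have "Suc (n - 1 - Suc k) = n - 1 - k" using 1 by simp
        finally show ?thesis using 1 by (simp add: c_def)
      next
        case 2
        then have "c (Suc k) = R x" by (simp add: c_def)
        moreover have "c k = x" using 2 by (simp add: c_def)
        ultimately show ?thesis by (simp add: R(1))
      next
        case 3
        then have "Suc k - n + 1 = Suc (k - n + 1)" by simp
        then have "c (Suc k) = R ((R ^^ (k - n + 1)) x)" using 3 by (simp add: c_def)
        moreover have "c k = (R ^^ (k - n + 1)) x" using 3 by (simp add: c_def)
        ultimately show ?thesis by (simp add: R(1))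
      qed
      thus ?thesis by simp
    qed
    define D where "D = C + 1"
    define K where "K = (\<Sum>j<n. norm ((T ^^ j) x)) + norm x"
    have D: "D > 0" "D \<ge> 1" using C(1) by (auto simp: D_def)
    have K0: "K \<ge> 0" by (simp add: K_def sum_nonneg)
    have Rpow: "norm ((R ^^ j) y) \<le> C^j * norm y" for j y
    proof (induction j)
      case 0 thus ?case by simp
    next
      case (Suc j)
      have "norm ((R ^^ Suc j) y) \<le> C * norm ((R ^^ j) y)" using R(2) by simp
      also have "\<dots> \<le> C * (C^j * norm y)" using Suc C(1) by (simp add: mult_left_mono)
      finally show ?case by (simp add: mult_ac)
    qed
    have bnd: "norm (c k) \<le> K * D^k" for k
    proof (cases "k < n")
      case True
      have "norm (c k) = norm ((T ^^ (n - 1 - k)) x)" using True by (simp add: c_def)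
      also have "\<dots> \<le> (\<Sum>j<n. norm ((T ^^ j) x))"
        by (rule member_le_sum[where f="\<lambda>j. norm ((T ^^ j) x)"]) (use True in auto)
      also have "\<dots> \<le> K" by (simp add: K_def)
      also have "\<dots> \<le> K * D^k" using K0 D by (simp add: mult_le_cancel_left1 one_le_power)
      finally show ?thesis .
    next
      case False
      have "norm (c k) = norm ((R ^^ (k - n + 1)) x)" using False by (simp add: c_def)
      also have "\<dots> \<le> C^(k - n + 1) * norm x" by (rule Rpow)
      also have "\<dots> \<le> D^(k - n + 1) * norm x"
        using C(1) by (intro mult_right_mono power_mono) (auto simp: D_def)
      also have "\<dots> \<le> D^k * norm x"
        using D n False by (intro mult_right_mono power_increasing) auto
      also have "\<dots> \<le> D^k * K" using D by (intro mult_left_mono) (auto simp: K_def sum_nonneg)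
      finally show ?thesis by (simp add: mult_ac)
    qed
    obtain r where r: "r > 0" "ball 0 r \<subseteq> \<Omega>" using assms(1,5) openE by blast
    obtain \<rho> where rho: "\<rho> > 0" and ex: "\<And>v'. (\<lambda>u. lfun v' (gam c u)) has_fps_expansion Abs_fps (\<lambda>k. lfun v' (c k))
        \<and> (\<lambda>u. lfun v' (S (gam c u))) has_fps_expansion Abs_fps (\<lambda>k. lfun v' (S (c k)))
        \<and> (\<forall>u\<in>ball 0 \<rho>. lfun v' (S (gam c u)) = \<phi> (u + 0) * lfun v' (gam c u))"
      using local_expansion[OF T Scb assms(7) r(2) r(1) c0 cS bnd D(1)] by blast
    have Phi: "\<phi> has_fps_expansion fps_expansion \<phi> 0"
      by (rule has_fps_expansion_fps_expansion[OF assms(1,5) holo])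
    have ev2: "eventually (\<lambda>u. u \<in> ball 0 \<rho>) (nhds (0::complex))"
      using rho by (intro eventually_nhds_in_open) auto
    have cx: "c (n - 1) = x" using n by (simp add: c_def)
    have cT: "c (n - Suc i) = (T ^^ i) x" if "i \<le> n - Suc 0" for i
      using that n by (simp add: c_def)
    have idx: "{0..n-1} = {..<n}" using n by auto
    have "lfun v (S x) = lfun v (\<Sum>k<n. scaleC ((deriv ^^ k) \<phi> 0 / fact k) ((T ^^ k) x))" for v
    proof -
      define f where "f = (\<lambda>u. lfun v (gam c u))"
      define g where "g = (\<lambda>u. lfun v (S (gam c u)))"
      define F where "F = Abs_fps (\<lambda>k. lfun v (c k))"
      define G where "G = Abs_fps (\<lambda>k. lfun v (S (c k)))"
      have fF: "f has_fps_expansion F" using ex[of v] by (simp add: f_def F_def)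
      have gG: "g has_fps_expansion G" using ex[of v] by (simp add: g_def G_def)
      have fg: "\<And>u. u \<in> ball 0 \<rho> \<Longrightarrow> g u = \<phi> u * f u" using ex[of v] by (simp add: f_def g_def)
      have pF: "(\<lambda>u. \<phi> u * f u) has_fps_expansion fps_expansion \<phi> 0 * F"
        by (rule has_fps_expansion_mult[OF Phi fF])
      have evq: "eventually (\<lambda>u. g u = \<phi> u * f u) (nhds 0)"
        using ev2 by eventually_elim (simp add: fg)
      have "G $ (n-1) = (deriv ^^ (n-1)) g 0 / fact (n-1)" by (rule fps_nth_fps_expansion[OF gG])
      also have "(deriv ^^ (n-1)) g 0 = (deriv ^^ (n-1)) (\<lambda>u. \<phi> u * f u) 0"
        by (rule higher_deriv_cong_ev[OF evq refl])
      also have "\<dots> / fact (n-1) = (fps_expansion \<phi> 0 * F) $ (n-1)"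
        by (rule fps_nth_fps_expansion[OF pF, symmetric])
      finally have eq: "G $ (n-1) = (fps_expansion \<phi> 0 * F) $ (n-1)" .
      have "lfun v (S x) = G $ (n-1)" unfolding G_def fps_nth_Abs_fps cx ..
      also have "\<dots> = (\<Sum>i=0..n-1. fps_expansion \<phi> 0 $ i * F $ (n - 1 - i))"
        by (simp only: eq fps_mult_nth)
      also have "\<dots> = (\<Sum>i=0..n-1. (deriv ^^ i) \<phi> 0 / fact i * lfun v ((T ^^ i) x))"
        by (intro sum.cong refl) (simp add: F_def fps_expansion_def cT)
      also have "\<dots> = (\<Sum>i<n. (deriv ^^ i) \<phi> 0 / fact i * lfun v ((T ^^ i) x))" by (simp only: idx)
      also have "\<dots> = lfun v (\<Sum>k<n. scaleC ((deriv ^^ k) \<phi> 0 / fact k) ((T ^^ k) x))"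
      proof -
        interpret L: bounded_linear "lfun v" by (rule lfun_bl)
        show ?thesis by (simp add: L.sum lfun_scaleC)
      qed
      finally show ?thesis .
    qed
    thus "S x = (\<Sum>k<n. scaleC ((deriv ^^ k) \<phi> 0 / fact k) ((T ^^ k) x))" by (rule lfun_ext)
  qed
  ultimately show ?thesis by blast
qed

end
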